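(* For a word $u$ of length $n$, the longest left-seed array $\mathsf{LSeed}^M[1..n]$, where $\mathsf{LSeed}^M[i]=\mathrm{lseedmax}(u[1..i])$, can be computed in $O(n)$ time.
   Context: Words are over a finite alphabet; $u[1..i]$ is the prefix of length $i$. A word $s$ covers $w$ if every position of $w$ lies in some occurrence of $s$ in $w$. A seed of $x$ is a factor $s$ of $x$ such that $x$ is a factor of some word covered by $s$; a left seed is a seed that is a prefix of $x$. $\mathrm{lseedmax}(x)$ is the length of the longest left seed of $x$ shorter than $x$, or $0$ if there is none. *)

theory Defs
  imports Main "HOL-Library.Sublist"
begin

text \<open>Words are lists; positions are 0-based internally. s occurs in w at position i.\<close>
definition occurs_at :: "'a list \<Rightarrow> 'a list \<Rightarrow> nat \<Rightarrow> bool" where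
  "occurs_at s w i \<longleftrightarrow> i + length s \<le> length w \<and> take (length s) (drop i w) = s"

definition covers :: "'a list \<Rightarrow> 'a list \<Rightarrow> bool" where
  "covers s w \<longleftrightarrow> (\<forall>j < length w. \<exists>i. occurs_at s w i \<and> i \<le> j \<and> j < i + length s)"

definition is_seed :: "'a list \<Rightarrow> 'a list \<Rightarrow> bool" where
  "is_seed s x \<longleftrightarrow> sublist s x \<and> (\<exists>y. covers s y \<and> sublist x y)"

definition is_left_seed :: "'a list \<Rightarrow> 'a list \<Rightarrow> bool" where
  "is_left_seed s x \<longleftrightarrow> is_seed s x \<and> prefix s x"

definition lseedmax :: "'a list \<Rightarrow> nat" where
  "lseedmax x = (if \<exists>s. is_left_seed s x \<and> length s < length x
                 then Max {length s | s. is_left_seed s x \<and> length s < length x}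
                 else 0)"

text \<open>The longest left-seed array: entry i (1-based, 1 \<le> i \<le> n) is lseedmax (u[1..i]).\<close>
definition LSeed :: "'a list \<Rightarrow> nat \<Rightarrow> nat" where
  "LSeed u i = lseedmax (take i u)"

text \<open>Registers and memory cells hold natural numbers; each instruction costs one step.
  No multiplication/division, so large numbers cannot be exploited for parallelism.\<close>
datatype instr =
    LoadC nat nat
  | Add nat nat nat
  | Sub nat nat nat
  | Load nat nat
  | Store nat nat
  | Jz nat nat
  | Halt

record config =
  pc :: nat
  regs :: "nat \<Rightarrow> nat"
  mem :: "nat \<Rightarrow> nat"

definition halted :: "instr list \<Rightarrow> config \<Rightarrow> bool" where
  "halted P c \<longleftrightarrow> pc c \<ge> length P \<or> P ! pc c = Halt"

fun exec_instr :: "instr \<Rightarrow> config \<Rightarrow> config" where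
  "exec_instr (LoadC r k) c = c\<lparr>pc := Suc (pc c), regs := (regs c)(r := k)\<rparr>"
| "exec_instr (Add r a b) c = c\<lparr>pc := Suc (pc c), regs := (regs c)(r := regs c a + regs c b)\<rparr>"
| "exec_instr (Sub r a b) c = c\<lparr>pc := Suc (pc c), regs := (regs c)(r := regs c a - regs c b)\<rparr>"
| "exec_instr (Load r a) c = c\<lparr>pc := Suc (pc c), regs := (regs c)(r := mem c (regs c a))\<rparr>"
| "exec_instr (Store a b) c = c\<lparr>pc := Suc (pc c), mem := (mem c)(regs c a := regs c b)\<rparr>"
| "exec_instr (Jz r l) c = c\<lparr>pc := (if regs c r = 0 then l else Suc (pc c))\<rparr>"
| "exec_instr Halt c = c"

definition step :: "instr list \<Rightarrow> config \<Rightarrow> config" where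
  "step P c = (if halted P c then c else exec_instr (P ! pc c) c)"

definition run :: "instr list \<Rightarrow> nat \<Rightarrow> config \<Rightarrow> config" where
  "run P k c = (step P ^^ k) c"

definition init_config :: "nat list \<Rightarrow> config" where
  "init_config u = \<lparr>pc = 0, regs = (\<lambda>_. 0),
     mem = (\<lambda>a. if a = 0 then length u else if a \<le> length u then u ! (a - 1) else 0)\<rparr>"

end

theory Submission
  imports Defs
begin

definition bordered :: "'a list \<Rightarrow> bool" where
  "bordered x \<longleftrightarrow> (\<exists>b. 0 < b \<and> b < length x \<and> (\<forall>t<b. x!t = x!(length x - b + t)))"

lemma occ_nth:
  assumes "occurs_at s y q" "t < length s" shows "y!(q+t) = s!t"
proof -
  have q: "q + length s \<le> length y" and e: "take (length s) (drop q y) = s"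
    using assms(1) unfolding occurs_at_def by auto
  have "s!t = take (length s) (drop q y) ! t" using e by simp
  also have "\<dots> = drop q y ! t" using assms(2) by simp
  also have "\<dots> = y!(q+t)" using q by simp
  finally show ?thesis by simp
qed

lemma unbordered_no_seed:
  assumes nb: "\<not> bordered x" and ls: "is_left_seed s x" and len: "length s < length x"
  shows False
proof -
  from ls have pre: "prefix s x" and "is_seed s x" by (auto simp: is_left_seed_def)
  then obtain y where cov: "covers s y" and sub: "sublist x y" by (auto simp: is_seed_def)
  from sub obtain a c where y: "y = a @ x @ c" by (auto simp: sublist_def)
  define j where "j = length a + length x - 1"
  have jl: "j < length y" using len y j_def by auto
  then obtain q where oc: "occurs_at s y q" and q1: "q \<le> j" and q2: "j < q + length s"
    using cov unfolding covers_def by blast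
  have qa: "q > length a" using q2 len j_def by linarith
  define d where "d = q - length a"
  define b where "b = length x - d"
  have "0 < b" "b < length x" using qa q1 j_def d_def b_def by auto
  moreover have "\<forall>t<b. x!t = x!(length x - b + t)"
  proof (intro allI impI)
    fix t assume tb: "t < b"
    have ts: "t < length s" using tb q2 j_def d_def b_def qa by linarith
    have e1: "length x - b + t = d + t" using b_def d_def q1 j_def qa by linarith
    have dt: "d + t < length x" using tb b_def e1 \<open>b < length x\<close> by linarith
    have "x!(d+t) = y!(length a + (d + t))" using y dt by (simp add: nth_append)
    also have "length a + (d+t) = q + t" using d_def qa by simp
    also have "y!(q+t) = s!t" using occ_nth[OF oc ts] .
    also have "s!t = x!t" using pre ts by (metis prefix_def nth_append)
    finally show "x!t = x!(length x - b + t)" using e1 by simp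
  qed
  ultimately show False using nb unfolding bordered_def by blast
qed

lemma bordered_seed:
  assumes bo: "bordered x"
  shows "is_left_seed (take (length x - 1) x) x"
proof -
  obtain b where b0: "0 < b" and bl: "b < length x" and bt: "\<forall>t<b. x!t = x!(length x - b + t)"
    using bo unfolding bordered_def by blast
  define p where "p = length x - b"
  have p0: "0 < p" using bl p_def by simp
  have per: "x!t = x!(t mod p)" if "t < length x" for t
    using that
  proof (induction t rule: less_induct)
    case (less t)
    show ?case
    proof (cases "t < p")
      case True then show ?thesis by simp
    next
      case False
      then have "t - p < b" using less.prems p_def by linarith
      then have "x!(t-p) = x!t" using bt p_def False
        by (metis add_diff_inverse_nat diff_add_cancel le_add_diff_inverse2 less_imp_le_nat not_less)
      moreover have "x!(t-p) = x!((t-p) mod p)" using less.IH[of "t-p"] less.prems False p0 by simp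
      moreover have "(t-p) mod p = t mod p" using False by (metis le_add_diff_inverse2 mod_add_self2 not_less)
      ultimately show ?thesis by simp
    qed
  qed
  define m where "m = length x - 1"
  define s where "s = take m x"
  define y where "y = map (\<lambda>t. x!(t mod p)) [0..<p+m]"
  have ly: "length y = p + m" by (simp add: y_def)
  have yn: "y!t = x!(t mod p)" if "t < p + m" for t using that by (simp add: y_def)
  have ls: "length s = m" using s_def m_def bl by simp
  have mp: "p \<le> m" using p_def m_def b0 by simp
  have lxy: "length x \<le> length y" using ly m_def bl p0 by simp
  have ypre: "take (length x) y = x"
  proof (rule nth_equalityI)
    show "length (take (length x) y) = length x" using lxy by simp
    fix t assume "t < length (take (length x) y)"
    then have t: "t < length x" by simp
    then have "t < p + m" using m_def p0 by linarith
    then show "take (length x) y ! t = x ! t" using t yn[of t] per[of t] by simp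
  qed
  have occ0: "occurs_at s y 0"
    unfolding occurs_at_def
  proof
    show "0 + length s \<le> length y" using ls ly by simp
    have "take (length s) y = take m (take (length x) y)" using ls m_def by simp
    then show "take (length s) (drop 0 y) = s" using ypre s_def by simp
  qed
  have occp: "occurs_at s y p"
    unfolding occurs_at_def
  proof
    show "p + length s \<le> length y" using ls ly by simp
    show "take (length s) (drop p y) = s"
    proof (rule nth_equalityI)
      show "length (take (length s) (drop p y)) = length s" using ls ly by simp
      fix t assume "t < length (take (length s) (drop p y))"
      then have t: "t < m" using ls ly by simp
      have "take (length s) (drop p y) ! t = y!(p+t)" using t ls ly by simp
      also have "\<dots> = x!((p+t) mod p)" using yn t by simp
      also have "\<dots> = x!(t mod p)" by simp
      also have "\<dots> = x!t" using per[of t] t m_def by simp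
      also have "\<dots> = s!t" using t s_def by simp
      finally show "take (length s) (drop p y) ! t = s!t" .
    qed
  qed
  have cov: "covers s y"
    unfolding covers_def
  proof (intro allI impI)
    fix j assume "j < length y"
    show "\<exists>i. occurs_at s y i \<and> i \<le> j \<and> j < i + length s"
    proof (cases "j < m")
      case True
      have "j < 0 + length s" using ls True by simp
      then show ?thesis using occ0 by blast
    next
      case False
      have "p \<le> j" using False mp by linarith
      moreover have "j < p + length s" using ls \<open>j < length y\<close> ly by linarith
      ultimately show ?thesis using occp by blast
    qed
  qed
  have "sublist x y" unfolding sublist_def
    by (rule exI[of _ "[]"], rule exI[of _ "drop (length x) y"]) (metis append_Nil append_take_drop_id ypre)
  moreover have "sublist s x" "prefix s x" using s_def by (auto simp: take_is_prefix prefix_imp_sublist)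
  ultimately show ?thesis using cov unfolding is_left_seed_def is_seed_def s_def m_def by blast
qed

lemma lseedmax_char: "lseedmax x = (if bordered x then length x - 1 else 0)"
proof (cases "bordered x")
  case True
  then have bl: "length x \<ge> 2" unfolding bordered_def by auto
  let ?S = "{length s |s. is_left_seed s x \<and> length s < length x}"
  have mem: "length x - 1 \<in> ?S" using bordered_seed[OF True] bl
    by (intro CollectI exI[of _ "take (length x - 1) x"]) auto
  have "Max ?S = length x - 1"
  proof (rule Max_eqI)
    show "finite ?S" by (rule finite_subset[of _ "{..<length x}"]) auto
  next
    fix y assume "y \<in> ?S" then show "y \<le> length x - 1" by force
  next
    show "length x - 1 \<in> ?S" by (rule mem)
  qed
  then show ?thesis using True mem unfolding lseedmax_def by auto
next
  case False
  then have "\<not> (\<exists>s. is_left_seed s x \<and> length s < length x)" using unbordered_no_seed by blast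
  then have "lseedmax x = 0" unfolding lseedmax_def by (rule if_not_P)
  then show ?thesis using False by simp
qed


definition B :: "'a list \<Rightarrow> nat \<Rightarrow> nat \<Rightarrow> bool" where
  "B u i b \<longleftrightarrow> b < i \<and> (\<forall>t<b. u!t = u!(i-b+t))"

definition F :: "'a list \<Rightarrow> nat \<Rightarrow> nat" where
  "F u i = (GREATEST b. B u i b)"

lemma B_bound: "B u i b \<Longrightarrow> b \<le> i" by (simp add: B_def)

lemma F_B: "0 < i \<Longrightarrow> B u i (F u i)"
  unfolding F_def by (rule GreatestI_nat[of _ 0 i]) (auto simp: B_def)

lemma F_max: "B u i b \<Longrightarrow> b \<le> F u i"
  unfolding F_def by (rule Greatest_le_nat[of _ b i]) (auto simp: B_def)

lemma F_less: "0 < i \<Longrightarrow> F u i < i"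
  using F_B[of i u] by (simp add: B_def)

lemma B_ext: "B u (Suc i) (Suc b) \<longleftrightarrow> B u i b \<and> u!b = u!i"
proof
  assume h: "B u (Suc i) (Suc b)"
  then have bi: "b < i" by (simp add: B_def)
  from h have a: "\<forall>t<Suc b. u!t = u!(i-b+t)" by (simp add: B_def)
  then have "u!b = u!(i-b+b)" by simp
  then show "B u i b \<and> u!b = u!i" using a bi by (simp add: B_def)
next
  assume h: "B u i b \<and> u!b = u!i"
  then have bi: "b < i" by (simp add: B_def)
  show "B u (Suc i) (Suc b)" unfolding B_def
  proof (intro conjI allI impI)
    show "Suc b < Suc i" using bi by simp
    fix t assume "t < Suc b"
    then show "u!t = u!(Suc i - Suc b + t)" using h bi
      by (cases "t = b") (auto simp: B_def)
  qed
qed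

lemma B_sub:
  assumes k: "B u i k" and bk: "b < k" shows "B u i b \<longleftrightarrow> B u k b"
proof -
  have ki: "k < i" using k by (simp add: B_def)
  have kk: "\<And>s. s < k \<Longrightarrow> u!s = u!(i-k+s)" using k by (simp add: B_def)
  have e: "\<And>t. t < b \<Longrightarrow> u!(k-b+t) = u!(i-b+t)"
  proof -
    fix t assume "t < b"
    then have "k-b+t < k" using bk by linarith
    then have "u!(k-b+t) = u!(i-k+(k-b+t))" by (rule kk)
    also have "i-k+(k-b+t) = i-b+t" using bk ki by linarith
    finally show "u!(k-b+t) = u!(i-b+t)" .
  qed
  show ?thesis unfolding B_def using e bk ki by auto
qed

definition inv_inner :: "'a list \<Rightarrow> nat \<Rightarrow> nat \<Rightarrow> bool" where
  "inv_inner u i k \<longleftrightarrow> B u i k \<and> (\<forall>b. B u i b \<and> k < b \<longrightarrow> u!b \<noteq> u!i)"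

lemma inv_init: "0 < i \<Longrightarrow> inv_inner u i (F u i)"
  unfolding inv_inner_def using F_B F_max by (meson not_le)

lemma inv_step:
  assumes iv: "inv_inner u i k" and k0: "0 < k" and ne: "u!k \<noteq> u!i"
  shows "inv_inner u i (F u k)"
proof -
  have Bk: "B u i k" using iv by (simp add: inv_inner_def)
  have fk: "F u k < k" using F_less k0 by blast
  have "B u i (F u k)" using B_sub[OF Bk fk] F_B[OF k0] by simp
  moreover have "u!b \<noteq> u!i" if "B u i b" "F u k < b" for b
  proof (cases "k < b")
    case True then show ?thesis using iv that by (simp add: inv_inner_def)
  next
    case False
    show ?thesis
    proof (cases "b = k")
      case True then show ?thesis using ne by simp
    next
      case False
      then have "b < k" using \<open>\<not> k < b\<close> by simp
      then have "B u k b" using B_sub[OF Bk] that by simp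
      then show ?thesis using F_max[of u k b] that by simp
    qed
  qed
  ultimately show ?thesis by (simp add: inv_inner_def)
qed

lemma inv_match:
  assumes iv: "inv_inner u i k" and eq: "u!k = u!i"
  shows "F u (Suc i) = Suc k"
proof -
  have Bk: "B u i k" using iv by (simp add: inv_inner_def)
  have b1: "B u (Suc i) (Suc k)" using B_ext Bk eq by blast
  have "F u (Suc i) \<le> Suc k"
  proof (rule ccontr)
    assume "\<not> F u (Suc i) \<le> Suc k"
    then obtain b where fb: "F u (Suc i) = Suc b" and kb: "k < b" by (cases "F u (Suc i)") auto
    have "B u (Suc i) (Suc b)" using F_B[of "Suc i" u] fb by simp
    then have "B u i b" "u!b = u!i" using B_ext by blast+
    then show False using iv kb by (simp add: inv_inner_def)
  qed
  moreover have "Suc k \<le> F u (Suc i)" using F_max b1 by blast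
  ultimately show ?thesis by simp
qed

lemma inv_nomatch:
  assumes iv: "inv_inner u i 0" and ne: "u!0 \<noteq> u!i"
  shows "F u (Suc i) = 0"
proof (rule ccontr)
  assume "F u (Suc i) \<noteq> 0"
  then obtain b where fb: "F u (Suc i) = Suc b" by (cases "F u (Suc i)") auto
  have "B u (Suc i) (Suc b)" using F_B[of "Suc i" u] fb by simp
  then have "B u i b" "u!b = u!i" using B_ext by blast+
  then show False using iv ne by (cases b) (auto simp: inv_inner_def)
qed

lemma F_1: "F u 1 = 0" using F_less[of 1 u] by simp

lemma bordered_F:
  assumes "i \<le> length u" and i0: "0 < i" shows "bordered (take i u) \<longleftrightarrow> 0 < F u i"
proof
  assume "bordered (take i u)"
  then obtain b where b: "0 < b" "b < i" "\<forall>t<b. take i u!t = take i u!(i - b + t)"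
    unfolding bordered_def using assms by auto
  have "B u i b" unfolding B_def using b by auto
  then show "0 < F u i" using F_max[of u i b] b by simp
next
  assume f: "0 < F u i"
  have "B u i (F u i)" using F_B[OF i0] .
  then show "bordered (take i u)" unfolding bordered_def B_def using f assms by auto
qed

lemma LSeed_F:
  assumes "i \<le> length u" "0 < i" shows "LSeed u i = (if F u i = 0 then 0 else i - 1)"
  unfolding LSeed_def lseedmax_char bordered_F[OF assms] using assms by auto


definition prog :: "instr list" where
  "prog = [LoadC 9 0,
    Load 1 9,
    Jz 1 38,
    LoadC 8 1,
    Add 4 1 8,
    LoadC 5 0,
    Store 4 5,
    LoadC 2 1,
    LoadC 3 0,
    Sub 4 1 2,
    Jz 4 28,
    Add 4 2 8,
    Load 5 4,
    Add 4 3 8,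
    Load 6 4,
    Sub 7 5 6,
    Sub 4 6 5,
    Add 7 7 4,
    Jz 7 23,
    Jz 3 24,
    Add 4 1 3,
    Load 3 4,
    Jz 0 13,
    Add 3 3 8,
    Add 2 2 8,
    Add 4 1 2,
    Store 4 3,
    Jz 0 9,
    LoadC 2 1,
    Add 4 1 2,
    Load 5 4,
    Jz 5 34,
    Sub 6 2 8,
    Store 4 6,
    Sub 6 1 2,
    Jz 6 38,
    Add 2 2 8,
    Jz 0 29,
    Halt]"

lemma prog_len[simp]: "length prog = 39" by (simp add: prog_def)

lemma prog_nth[simp]:
  "prog ! 0 = LoadC 9 0"
  "prog ! 1 = Load 1 9"
  "prog ! 2 = Jz 1 38"
  "prog ! 3 = LoadC 8 1"
  "prog ! 4 = Add 4 1 8"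
  "prog ! 5 = LoadC 5 0"
  "prog ! 6 = Store 4 5"
  "prog ! 7 = LoadC 2 1"
  "prog ! 8 = LoadC 3 0"
  "prog ! 9 = Sub 4 1 2"
  "prog ! 10 = Jz 4 28"
  "prog ! 11 = Add 4 2 8"
  "prog ! 12 = Load 5 4"
  "prog ! 13 = Add 4 3 8"
  "prog ! 14 = Load 6 4"
  "prog ! 15 = Sub 7 5 6"
  "prog ! 16 = Sub 4 6 5"
  "prog ! 17 = Add 7 7 4"
  "prog ! 18 = Jz 7 23"
  "prog ! 19 = Jz 3 24"
  "prog ! 20 = Add 4 1 3"
  "prog ! 21 = Load 3 4"
  "prog ! 22 = Jz 0 13"
  "prog ! 23 = Add 3 3 8"
  "prog ! 24 = Add 2 2 8"
  "prog ! 25 = Add 4 1 2"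
  "prog ! 26 = Store 4 3"
  "prog ! 27 = Jz 0 9"
  "prog ! 28 = LoadC 2 1"
  "prog ! 29 = Add 4 1 2"
  "prog ! 30 = Load 5 4"
  "prog ! 31 = Jz 5 34"
  "prog ! 32 = Sub 6 2 8"
  "prog ! 33 = Store 4 6"
  "prog ! 34 = Sub 6 1 2"
  "prog ! 35 = Jz 6 38"
  "prog ! 36 = Add 2 2 8"
  "prog ! 37 = Jz 0 29"
  "prog ! 38 = Halt"
  by (simp_all add: prog_def)

lemma run_0[simp]: "run P 0 c = c" by (simp add: run_def)
lemma run_1: "run P 1 c = step P (c)" by (simp add: run_def eval_nat_numeral)
lemma run_2: "run P 2 c = step P (step P (c))" by (simp add: run_def eval_nat_numeral)
lemma run_3: "run P 3 c = step P (step P (step P (c)))" by (simp add: run_def eval_nat_numeral)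
lemma run_4: "run P 4 c = step P (step P (step P (step P (c))))" by (simp add: run_def eval_nat_numeral)
lemma run_5: "run P 5 c = step P (step P (step P (step P (step P (c)))))" by (simp add: run_def eval_nat_numeral)
lemma run_6: "run P 6 c = step P (step P (step P (step P (step P (step P (c))))))" by (simp add: run_def eval_nat_numeral)
lemma run_7: "run P 7 c = step P (step P (step P (step P (step P (step P (step P (c)))))))" by (simp add: run_def eval_nat_numeral)
lemma run_8: "run P 8 c = step P (step P (step P (step P (step P (step P (step P (step P (c))))))))" by (simp add: run_def eval_nat_numeral)
lemma run_9: "run P 9 c = step P (step P (step P (step P (step P (step P (step P (step P (step P (c)))))))))" by (simp add: run_def eval_nat_numeral)
lemma run_10: "run P 10 c = step P (step P (step P (step P (step P (step P (step P (step P (step P (step P (c))))))))))" by (simp add: run_def eval_nat_numeral)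
lemma run_11: "run P 11 c = step P (step P (step P (step P (step P (step P (step P (step P (step P (step P (step P (c)))))))))))" by (simp add: run_def eval_nat_numeral)
lemma run_Suc: "run P (Suc k) c = run P k (step P c)"
  unfolding run_def funpow_Suc_right by simp
lemma run_num: "run P (numeral n) c = run P (pred_numeral n) (step P c)"
  by (simp only: numeral_eq_Suc run_Suc)
lemma run_add: "run P (a+b) c = run P b (run P a c)"
  by (simp add: run_def funpow_add add.commute[of a b])

lemma step_halted: "halted P c \<Longrightarrow> step P c = c" by (simp add: step_def)
lemma run_halted: "halted P c \<Longrightarrow> run P k c = c"
  by (induction k) (simp_all add: run_def step_halted)

lemma diff_sum0: "((a::nat) - b) + (b - a) = 0 \<longleftrightarrow> a = b" by auto

lemma prog_nth1[simp]: "prog ! Suc 0 = Load 1 9" by (simp add: prog_def)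

lemmas ex_simps = run_3 run_4 run_5 run_7 run_9 run_10 run_11 step_def halted_def diff_sum0

definition base :: "nat list \<Rightarrow> config \<Rightarrow> bool" where
  "base u c \<longleftrightarrow> regs c 0 = 0 \<and> regs c 1 = length u \<and> regs c 8 = 1 \<and> mem c 0 = length u
     \<and> (\<forall>j<length u. mem c (Suc j) = u!j)"

definition outer :: "nat list \<Rightarrow> config \<Rightarrow> nat \<Rightarrow> bool" where
  "outer u c i \<longleftrightarrow> pc c = 9 \<and> base u c \<and> regs c 2 = i \<and> 1 \<le> i \<and> i \<le> length u
     \<and> regs c 3 = F u i \<and> (\<forall>j. 1 \<le> j \<and> j \<le> i \<longrightarrow> mem c (length u + j) = F u j)"

definition inner :: "nat list \<Rightarrow> config \<Rightarrow> nat \<Rightarrow> nat \<Rightarrow> bool" where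
  "inner u c i k \<longleftrightarrow> pc c = 13 \<and> base u c \<and> regs c 2 = i \<and> 1 \<le> i \<and> i < length u
     \<and> regs c 3 = k \<and> regs c 5 = u!i \<and> inv_inner u i k
     \<and> (\<forall>j. 1 \<le> j \<and> j \<le> i \<longrightarrow> mem c (length u + j) = F u j)"

lemma outer_to_inner:
  assumes "outer u c i" "i < length u" shows "inner u (run prog 4 c) i (F u i)"
  using assms inv_init[of i u] unfolding inner_def outer_def base_def
  by (auto simp: ex_simps)

lemma inner_k: "inner u c i k \<Longrightarrow> k < i"
  unfolding inner_def inv_inner_def B_def by auto

lemma inner_facts:
  assumes "inner u c i k"
  shows "pc c = 13" "regs c 0 = 0" "regs c 1 = length u" "regs c 8 = 1" "regs c 2 = i"
    "regs c 3 = k" "regs c 5 = u!i" "mem c (Suc k) = u!k" "k < i" "i < length u" "1 \<le> i"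
    "0 < k \<Longrightarrow> mem c (length u + k) = F u k"
  using assms inner_k[OF assms] unfolding inner_def base_def by auto

lemma iter_exec:
  assumes "pc c = 13" "regs c 0 = 0" "regs c 1 = n" "regs c 8 = 1" "regs c 2 = i"
    "regs c 3 = k" "regs c 5 = u!i" "mem c (Suc k) = u!k" "mem c (n + k) = F u k" "0 < k" "u!k \<noteq> u!i"
  shows "pc (run prog 10 c) = 13 \<and> regs (run prog 10 c) 0 = 0 \<and> regs (run prog 10 c) 1 = n
    \<and> regs (run prog 10 c) 8 = 1 \<and> regs (run prog 10 c) 2 = i \<and> regs (run prog 10 c) 3 = F u k
    \<and> regs (run prog 10 c) 5 = u!i \<and> mem (run prog 10 c) = mem c"
  using assms by (simp add: ex_simps)

lemma nomatch_exec:
  assumes "pc c = 13" "regs c 0 = 0" "regs c 1 = n" "regs c 8 = 1" "regs c 2 = i"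
    "regs c 3 = 0" "regs c 5 = u!i" "mem c (Suc 0) = u!0" "u!0 \<noteq> u!i"
  shows "pc (run prog 11 c) = 9 \<and> regs (run prog 11 c) 0 = 0 \<and> regs (run prog 11 c) 1 = n
    \<and> regs (run prog 11 c) 8 = 1 \<and> regs (run prog 11 c) 2 = Suc i \<and> regs (run prog 11 c) 3 = 0
    \<and> mem (run prog 11 c) = (mem c)(n + Suc i := 0)"
  using assms by (simp add: ex_simps)

lemma inner_iter:
  assumes a: "inner u c i k" and k0: "0 < k" and ne: "u!k \<noteq> u!i"
  shows "inner u (run prog 10 c) i (F u k)"
proof -
  note f = inner_facts[OF a]
  have mk: "mem c (length u + k) = F u k" using f(12) k0 .
  let ?c = "run prog 10 c"
  have g: "pc ?c = 13" "regs ?c 0 = 0" "regs ?c 1 = length u" "regs ?c 8 = 1" "regs ?c 2 = i"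
    "regs ?c 3 = F u k" "regs ?c 5 = u!i" "mem ?c = mem c"
    using iter_exec[OF f(1-8) mk k0 ne] by auto
  have iv: "inv_inner u i (F u k)" using inv_step[OF _ k0 ne] a unfolding inner_def by simp
  show ?thesis using a iv unfolding inner_def base_def g by simp
qed

lemma inner_match:
  assumes a: "inner u c i k" and eq: "u!k = u!i" shows "outer u (run prog 11 c) (Suc i)"
proof -
  note f = inner_facts[OF a]
  have ivk: "inv_inner u i k" using a unfolding inner_def by simp
  have fi: "F u (Suc i) = Suc k" by (rule inv_match[OF ivk eq])
  let ?c = "run prog 11 c"
  have g: "pc ?c = 9" "regs ?c 0 = 0" "regs ?c 1 = length u" "regs ?c 8 = 1" "regs ?c 2 = Suc i"
    "regs ?c 3 = Suc k" "mem ?c = (mem c)(length u + Suc i := Suc k)"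
    using f(1-8) eq by (simp_all add: ex_simps)
  show ?thesis using a fi f(10) unfolding inner_def outer_def base_def g by (auto simp: le_Suc_eq)
qed

lemma inner_nomatch:
  assumes a: "inner u c i 0" and ne: "u!0 \<noteq> u!i" shows "outer u (run prog 11 c) (Suc i)"
proof -
  note f = inner_facts[OF a]
  have ivk: "inv_inner u i 0" using a unfolding inner_def by simp
  have fi: "F u (Suc i) = 0" by (rule inv_nomatch[OF ivk ne])
  let ?c = "run prog 11 c"
  have g: "pc ?c = 9" "regs ?c 0 = 0" "regs ?c 1 = length u" "regs ?c 8 = 1" "regs ?c 2 = Suc i"
    "regs ?c 3 = 0" "mem ?c = (mem c)(length u + Suc i := 0)"
    using nomatch_exec[OF f(1-8) ne] by auto
  show ?thesis using a fi f(10) unfolding inner_def outer_def base_def g by (auto simp: le_Suc_eq)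
qed

definition ph2 :: "nat list \<Rightarrow> config \<Rightarrow> nat \<Rightarrow> bool" where
  "ph2 u c i \<longleftrightarrow> pc c = 29 \<and> regs c 0 = 0 \<and> regs c 1 = length u \<and> regs c 8 = 1 \<and> regs c 2 = i
     \<and> 1 \<le> i \<and> i \<le> length u
     \<and> (\<forall>j. 1 \<le> j \<and> j < i \<longrightarrow> mem c (length u + j) = LSeed u j)
     \<and> (\<forall>j. i \<le> j \<and> j \<le> length u \<longrightarrow> mem c (length u + j) = F u j)"

lemma outer_exit:
  assumes "outer u c i" "i = length u" shows "ph2 u (run prog 3 c) 1"
  using assms unfolding outer_def base_def ph2_def
  by (auto simp: ex_simps)

lemma ph2_step:
  assumes a: "ph2 u c i" and il: "i < length u" shows "\<exists>t \<le> 9. ph2 u (run prog t c) (Suc i)"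
proof -
  have f: "pc c = 29" "regs c 0 = 0" "regs c 1 = length u" "regs c 8 = 1" "regs c 2 = i" "1 \<le> i"
    "mem c (length u + i) = F u i"
    using a il unfolding ph2_def by auto
  have lo: "\<forall>j. 1 \<le> j \<and> j < i \<longrightarrow> mem c (length u + j) = LSeed u j"
   and hi: "\<forall>j. i \<le> j \<and> j \<le> length u \<longrightarrow> mem c (length u + j) = F u j"
    using a unfolding ph2_def by auto
  have ii: "0 < i" "i \<le> length u" using f il by auto
  show ?thesis
  proof (cases "F u i = 0")
    case True
    have L: "LSeed u i = 0" using LSeed_F[OF ii(2) ii(1)] True by simp
    let ?c = "run prog 7 c"
    have g: "pc ?c = 29" "regs ?c 0 = 0" "regs ?c 1 = length u" "regs ?c 8 = 1" "regs ?c 2 = Suc i"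
      "mem ?c = mem c"
      using f True il by (simp_all add: ex_simps)
    have "ph2 u ?c (Suc i)" unfolding ph2_def g
      using lo hi f il True L by (auto simp: less_Suc_eq)
    then show ?thesis by (intro exI[of _ 7]) simp
  next
    case False
    have L: "LSeed u i = i - 1" using LSeed_F[OF ii(2) ii(1)] False by simp
    let ?c = "run prog 9 c"
    have g: "pc ?c = 29" "regs ?c 0 = 0" "regs ?c 1 = length u" "regs ?c 8 = 1" "regs ?c 2 = Suc i"
      "mem ?c = (mem c)(length u + i := i - 1)"
      using f False il by (simp_all add: ex_simps)
    have "ph2 u ?c (Suc i)" unfolding ph2_def g
      using lo hi f il False L by (auto simp: less_Suc_eq)
    then show ?thesis by (intro exI[of _ 9]) simp
  qed
qed

lemma ph2_last:
  assumes a: "ph2 u c i" and il: "i = length u"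
  shows "\<exists>t \<le> 7. halted prog (run prog t c) \<and> (\<forall>j \<in> {1..length u}. mem (run prog t c) (length u + j) = LSeed u j)"
proof -
  have f: "pc c = 29" "regs c 0 = 0" "regs c 1 = length u" "regs c 8 = 1" "regs c 2 = i" "1 \<le> i"
    "mem c (length u + i) = F u i"
    using a il unfolding ph2_def by auto
  have lo: "\<forall>j. 1 \<le> j \<and> j < i \<longrightarrow> mem c (length u + j) = LSeed u j"
    using a unfolding ph2_def by auto
  have ii: "0 < i" "i \<le> length u" using f il by auto
  show ?thesis
  proof (cases "F u i = 0")
    case True
    have L: "LSeed u i = 0" using LSeed_F[OF ii(2) ii(1)] True by simp
    let ?c = "run prog 5 c"
    have g: "pc ?c = 38" "mem ?c = mem c"
      using f True il by (simp_all add: ex_simps)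
    have "halted prog ?c" using g by (simp add: halted_def)
    moreover have "\<forall>j \<in> {1..length u}. mem ?c (length u + j) = LSeed u j"
      unfolding g using lo f il True L by (auto simp: le_less)
    ultimately show ?thesis by (intro exI[of _ 5]) simp
  next
    case False
    have L: "LSeed u i = i - 1" using LSeed_F[OF ii(2) ii(1)] False by simp
    let ?c = "run prog 7 c"
    have g: "pc ?c = 38" "mem ?c = (mem c)(length u + i := i - 1)"
      using f False il by (simp_all add: ex_simps)
    have "halted prog ?c" using g by (simp add: halted_def)
    moreover have "\<forall>j \<in> {1..length u}. mem ?c (length u + j) = LSeed u j"
      unfolding g using lo f il False L by (auto simp: le_less)
    ultimately show ?thesis by (intro exI[of _ 7]) simp
  qed
qed

lemma init_pos:
  assumes "0 < length u" shows "outer u (run prog 9 (init_config u)) 1"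
  using assms F_1[of u] Suc_leI[OF assms] unfolding outer_def base_def init_config_def
  by (auto simp: ex_simps numeral_2_eq_2[symmetric])

lemma init_zero:
  assumes "length u = 0" shows "halted prog (run prog 3 (init_config u))"
  using assms unfolding init_config_def
  by (auto simp: ex_simps numeral_2_eq_2[symmetric])


lemma inner_loop:
  "inner u c i k \<Longrightarrow> \<exists>t. outer u (run prog t c) (Suc i) \<and> t + 10 * F u (Suc i) \<le> 10 * k + 21"
proof (induction k arbitrary: c rule: less_induct)
  case (less k)
  have iv: "inv_inner u i k" using less.prems unfolding inner_def by simp
  show ?case
  proof (cases "u!k = u!i")
    case True
    have "F u (Suc i) = Suc k" using inv_match[OF iv True] .
    then show ?thesis using inner_match[OF less.prems True] by (intro exI[of _ 11]) simp
  next
    case ne: False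
    show ?thesis
    proof (cases "k = 0")
      case True
      have "F u (Suc i) = 0" using inv_nomatch[of u i] iv ne True by simp
      then show ?thesis using inner_nomatch[of u c i] less.prems ne True by (intro exI[of _ 11]) simp
    next
      case False
      then have k0: "0 < k" by simp
      have c1: "inner u (run prog 10 c) i (F u k)" using inner_iter[OF less.prems k0 ne] .
      have fk: "F u k < k" using F_less[OF k0] .
      obtain t where t: "outer u (run prog t (run prog 10 c)) (Suc i)"
        "t + 10 * F u (Suc i) \<le> 10 * F u k + 21"
        using less.IH[OF fk c1] by blast
      have "run prog (10 + t) c = run prog t (run prog 10 c)" by (rule run_add)
      then show ?thesis using t fk by (intro exI[of _ "10 + t"]) auto
    qed
  qed
qed

lemma outer_loop:
  "outer u c i \<Longrightarrow> \<exists>t. ph2 u (run prog t c) 1 \<and> t \<le> 10 * F u i + 25 * (length u - i) + 3"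
proof (induction "length u - i" arbitrary: c i)
  case 0
  then have "i = length u" unfolding outer_def by simp
  then show ?case using outer_exit[OF 0(2)] by (intro exI[of _ 3]) simp
next
  case (Suc m)
  have il: "i < length u" using Suc.hyps(2) by simp
  have c1: "inner u (run prog 4 c) i (F u i)" using outer_to_inner[OF Suc.prems il] .
  obtain t1 where t1: "outer u (run prog t1 (run prog 4 c)) (Suc i)"
     "t1 + 10 * F u (Suc i) \<le> 10 * F u i + 21"
    using inner_loop[OF c1] by blast
  have m: "m = length u - Suc i" using Suc.hyps(2) by simp
  obtain t2 where t2: "ph2 u (run prog t2 (run prog t1 (run prog 4 c))) 1"
     "t2 \<le> 10 * F u (Suc i) + 25 * (length u - Suc i) + 3"
    using Suc.hyps(1)[OF m t1(1)] by blast
  have "run prog (4 + t1 + t2) c = run prog t2 (run prog t1 (run prog 4 c))"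
    by (simp add: run_add)
  moreover have "4 + t1 + t2 \<le> 10 * F u i + 25 * (length u - i) + 3"
    using t1(2) t2(2) il by linarith
  ultimately show ?case using t2(1) by (intro exI[of _ "4 + t1 + t2"]) simp
qed

lemma ph2_loop:
  "ph2 u c i \<Longrightarrow> \<exists>t. t \<le> 9 * (length u - i) + 7 \<and> halted prog (run prog t c) \<and>
     (\<forall>j \<in> {1..length u}. mem (run prog t c) (length u + j) = LSeed u j)"
proof (induction "length u - i" arbitrary: c i)
  case 0
  then have "i = length u" unfolding ph2_def by simp
  then show ?case using ph2_last[OF 0(2)] by auto
next
  case (Suc m)
  have il: "i < length u" using Suc.hyps(2) by simp
  obtain t1 where t1: "t1 \<le> 9" "ph2 u (run prog t1 c) (Suc i)" using ph2_step[OF Suc.prems il] by blast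
  have m: "m = length u - Suc i" using Suc.hyps(2) by simp
  obtain t2 where t2: "t2 \<le> 9 * (length u - Suc i) + 7" "halted prog (run prog t2 (run prog t1 c))"
     "\<forall>j \<in> {1..length u}. mem (run prog t2 (run prog t1 c)) (length u + j) = LSeed u j"
    using Suc.hyps(1)[OF m t1(2)] by blast
  have "run prog (t1 + t2) c = run prog t2 (run prog t1 c)" by (rule run_add)
  moreover have "t1 + t2 \<le> 9 * (length u - i) + 7" using t1(1) t2(1) il by linarith
  ultimately show ?case using t2 by (intro exI[of _ "t1 + t2"]) simp
qed

theorem theorem3:
  fixes \<sigma> :: nat
  shows "\<exists>(P :: instr list) (C :: nat). \<forall>u :: nat list. set u \<subseteq> {..<\<sigma>} \<longrightarrow>
           (\<exists>k \<le> C * (length u + 1).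
              halted P (run P k (init_config u)) \<and>
              (\<forall>i \<in> {1..length u}. mem (run P k (init_config u)) (length u + i) = LSeed u i))"
proof (rule exI[of _ prog], rule exI[of _ 60], intro allI impI)
  fix u :: "nat list"
  assume "set u \<subseteq> {..<\<sigma>}"
  show "\<exists>k \<le> 60 * (length u + 1).
              halted prog (run prog k (init_config u)) \<and>
              (\<forall>i \<in> {1..length u}. mem (run prog k (init_config u)) (length u + i) = LSeed u i)"
  proof (cases "length u = 0")
    case True
    then show ?thesis using init_zero[OF True] by (intro exI[of _ 3]) simp
  next
    case False
    then have n0: "0 < length u" by simp
    obtain t1 where t1: "ph2 u (run prog t1 (run prog 9 (init_config u))) 1"
        "t1 \<le> 10 * F u 1 + 25 * (length u - 1) + 3"
      using outer_loop[OF init_pos[OF n0]] by blast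
    obtain t2 where t2: "t2 \<le> 9 * (length u - 1) + 7"
       "halted prog (run prog t2 (run prog t1 (run prog 9 (init_config u))))"
       "\<forall>j \<in> {1..length u}. mem (run prog t2 (run prog t1 (run prog 9 (init_config u)))) (length u + j) = LSeed u j"
      using ph2_loop[OF t1(1)] by blast
    have "run prog (9 + t1 + t2) (init_config u) = run prog t2 (run prog t1 (run prog 9 (init_config u)))"
      by (simp add: run_add)
    moreover have "9 + t1 + t2 \<le> 60 * (length u + 1)" using t1(2) t2(1) F_1[of u] by simp
    ultimately show ?thesis using t2 by (intro exI[of _ "9 + t1 + t2"]) simp
  qed
qed

end
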